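(* Let $M\subset \bigoplus_{i=1}^r A[-\delta_i]$ be a graded right $A$-submodule, and let $\delta'_i$ be integers with $\delta_i\ge\delta'_i\ge 0$. Put $\bar M=H(M)\subset\bigoplus_{i=1}^r \bar A[-\delta'_i]$ and $\bar M' = \bar M\cap \bigoplus_{i} t^{\delta_i-\delta'_i}A[-\delta_i]$, where $\bigoplus_i t^{\delta_i-\delta'_i}A[-\delta_i]$ denotes the set of elements $\sum_i \bar e_i\, t^{\delta_i-\delta'_i} a_i$ with $a_i\in A$. Then $\eta(M)=\bar M'$. In particular $\dim_{\mathbb K} M_d=\dim_{\mathbb K}\bar M'_d$ for all $d\ge 0$.
   Context: Let $\mathbb K$ be a field and $F=\mathbb K\langle x_1,\dots,x_n\rangle$ the free associative algebra with the standard grading ($\deg x_i=1$). Let $I\subset F$ be a graded two-sided ideal and $A=F/I$. For an integer $\delta\ge0$, $A[-\delta]$ denotes $A$ with shifted grading $A[-\delta]_d=A_{d-\delta}$ (and $0$ for $d<\delta$). $\bigoplus_{i=1}^r A[-\delta_i]$ is the graded free right $A$-module with canonical basis $e_1,\dots,e_r$, $\deg e_i=\delta_i$. A right submodule $M$ is graded if it is the sum of its homogeneous components $M_d$. Let $t$ be a new variable, $\bar F=\mathbb K\langle x_1,\dots,x_n,t\rangle$ with standard grading, $\bar I$ the two-sided ideal of $\bar F$ generated by $I$, and $\bar A=\bar F/\bar I$; $A$ embeds canonically in $\bar A$. For integers $\delta_i\ge\delta'_i\ge0$, $\bigoplus_i\bar A[-\delta'_i]$ is the graded free right $\bar A$-module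 with canonical basis $\bar e_i$, $\deg\bar e_i=\delta'_i$, and $\eta:\bigoplus_i A[-\delta_i]\to\bigoplus_i\bar A[-\delta'_i]$ is the injective graded right $A$-module homomorphism $e_i\mapsto \bar e_i t^{\delta_i-\delta'_i}$. For a graded right $A$-submodule $M$, the component homogenization $H(M)$ is the right $\bar A$-submodule of $\bigoplus_i\bar A[-\delta'_i]$ generated by $\eta(M)$. *)

theory Defs
  imports "HOL-Library.Poly_Mapping" "HOL-Library.Extended_Nat"
begin

datatype 'x word = Wd "'x list"

fun wlen :: "'x word \<Rightarrow> nat" where "wlen (Wd u) = length u"

instantiation word :: (type) monoid_add
begin
definition zero_word :: "'x word" where "zero_word = Wd []"
fun plus_word :: "'x word \<Rightarrow> 'x word \<Rightarrow> 'x word" where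
  "plus_word (Wd u) (Wd v) = Wd (u @ v)"
instance
proof
  fix a b c :: "'x word"
  show "a + b + c = a + (b + c)" by (cases a; cases b; cases c) simp_all
  show "0 + a = a" by (cases a) (simp add: zero_word_def)
  show "a + 0 = a" by (cases a) (simp add: zero_word_def)
qed
end

text \<open>Noncommutative polynomials: finitely supported functions words => K.
  The product is the convolution over concatenation of words (Poly_Mapping).\<close>
type_synonym ('x, 'k) ncpoly = "'x word \<Rightarrow>\<^sub>0 'k"

definition hom :: "nat \<Rightarrow> ('x, 'k::zero) ncpoly \<Rightarrow> bool" where
  "hom d p \<longleftrightarrow> (\<forall>w\<in>Poly_Mapping.keys p. wlen w = d)"

definition twosided_ideal :: "('x, 'k::ring_1) ncpoly set \<Rightarrow> bool" where
  "twosided_ideal J \<longleftrightarrow> 0 \<in> J \<and> (\<forall>p\<in>J. \<forall>q\<in>J. p + q \<in> J) \<and> (\<forall>p\<in>J. - p \<in> J)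
     \<and> (\<forall>p\<in>J. \<forall>a b. a * p * b \<in> J)"

definition hcomp :: "nat \<Rightarrow> ('x, 'k::zero) ncpoly \<Rightarrow> ('x, 'k) ncpoly" where
  "hcomp d p = Abs_poly_mapping (\<lambda>w. if wlen w = d then Poly_Mapping.lookup p w else 0)"

definition graded_ideal :: "('x, 'k::ring_1) ncpoly set \<Rightarrow> bool" where
  "graded_ideal J \<longleftrightarrow> twosided_ideal J \<and> (\<forall>p\<in>J. \<forall>d. hcomp d p \<in> J)"

definition gen_ideal :: "('x, 'k::ring_1) ncpoly set \<Rightarrow> ('x, 'k) ncpoly set" where
  "gen_ideal S = \<Inter>{J. twosided_ideal J \<and> S \<subseteq> J}"

definition smult :: "'k::ring_1 \<Rightarrow> ('x, 'k) ncpoly \<Rightarrow> ('x, 'k) ncpoly" where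
  "smult c p = Poly_Mapping.single 0 c * p"

section \<open>Adjoining the variable t: letters 'x option, with t = None, x_i = Some x_i\<close>

definition emb :: "('x, 'k::ring_1) ncpoly \<Rightarrow> ('x option, 'k) ncpoly" where
  "emb p = (\<Sum>w\<in>Poly_Mapping.keys p. Poly_Mapping.single (case w of Wd u \<Rightarrow> Wd (map Some u)) (Poly_Mapping.lookup p w))"

definition tpow :: "nat \<Rightarrow> ('x option, 'k::ring_1) ncpoly" where
  "tpow k = Poly_Mapping.single (Wd (replicate k None)) 1"

text \<open>An element of the free module (F/J)^r (basis indexed by the type 'r) is the class of a
  representative vector v : 'r => F, i.e. the coset v + J^r.\<close>
definition qv :: "('y, 'k::ring_1) ncpoly set \<Rightarrow> ('r \<Rightarrow> ('y, 'k) ncpoly) \<Rightarrow> ('r \<Rightarrow> ('y, 'k) ncpoly) set" where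
  "qv J v = {w. \<forall>i. w i - v i \<in> J}"

definition qadd :: "('y, 'k::ring_1) ncpoly set \<Rightarrow> ('r \<Rightarrow> ('y, 'k) ncpoly) set
    \<Rightarrow> ('r \<Rightarrow> ('y, 'k) ncpoly) set \<Rightarrow> ('r \<Rightarrow> ('y, 'k) ncpoly) set" where
  "qadd J X Y = \<Union>{qv J (\<lambda>i. x i + y i) | x y. x \<in> X \<and> y \<in> Y}"

definition qrmult :: "('y, 'k::ring_1) ncpoly set \<Rightarrow> ('r \<Rightarrow> ('y, 'k) ncpoly) set
    \<Rightarrow> ('y, 'k) ncpoly \<Rightarrow> ('r \<Rightarrow> ('y, 'k) ncpoly) set" where
  "qrmult J X p = \<Union>{qv J (\<lambda>i. x i * p) | x. x \<in> X}"

definition rsubmod :: "('y, 'k::ring_1) ncpoly set \<Rightarrow> ('r \<Rightarrow> ('y, 'k) ncpoly) set set \<Rightarrow> bool" where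
  "rsubmod J N \<longleftrightarrow> N \<subseteq> range (qv J) \<and> qv J (\<lambda>i. 0) \<in> N \<and> (\<forall>X\<in>N. \<forall>Y\<in>N. qadd J X Y \<in> N)
     \<and> (\<forall>X\<in>N. \<forall>p. qrmult J X p \<in> N)"

definition gen_rsubmod :: "('y, 'k::ring_1) ncpoly set \<Rightarrow> ('r \<Rightarrow> ('y, 'k) ncpoly) set set
    \<Rightarrow> ('r \<Rightarrow> ('y, 'k) ncpoly) set set" where
  "gen_rsubmod J S = \<Inter>{N. rsubmod J N \<and> S \<subseteq> N}"

text \<open>Grading of the shifted free module with deg e_i = \<delta> i: a representative vector
  is homogeneous of degree d if its i-th entry is homogeneous of degree d - \<delta> i
  (and is 0 when d < \<delta> i).\<close>
definition homv :: "('r \<Rightarrow> nat) \<Rightarrow> nat \<Rightarrow> ('r \<Rightarrow> ('y, 'k::zero) ncpoly) \<Rightarrow> bool" where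
  "homv \<delta> d v \<longleftrightarrow> (\<forall>i. if \<delta> i \<le> d then hom (d - \<delta> i) (v i) else v i = 0)"

definition hpart :: "('y, 'k::ring_1) ncpoly set \<Rightarrow> ('r \<Rightarrow> nat) \<Rightarrow> nat
    \<Rightarrow> ('r \<Rightarrow> ('y, 'k) ncpoly) set set \<Rightarrow> ('r \<Rightarrow> ('y, 'k) ncpoly) set set" where
  "hpart J \<delta> d N = {X\<in>N. \<exists>v. homv \<delta> d v \<and> X = qv J v}"

definition graded_rsubmod :: "('y, 'k::ring_1) ncpoly set \<Rightarrow> ('r \<Rightarrow> nat)
    \<Rightarrow> ('r \<Rightarrow> ('y, 'k) ncpoly) set set \<Rightarrow> bool" where
  "graded_rsubmod J \<delta> N \<longleftrightarrow> rsubmod J N \<and>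
     (\<forall>X\<in>N. \<exists>D y. finite D \<and> (\<forall>d\<in>D. homv \<delta> d (y d) \<and> qv J (y d) \<in> N)
        \<and> X = qv J (\<lambda>i. \<Sum>d\<in>D. y d i))"

definition qindep :: "('y, 'k::ring_1) ncpoly set \<Rightarrow> (nat \<Rightarrow> ('r \<Rightarrow> ('y, 'k) ncpoly) set) \<Rightarrow> nat \<Rightarrow> bool" where
  "qindep J Xs k \<longleftrightarrow> (\<forall>x c. (\<forall>j<k. x j \<in> Xs j) \<longrightarrow>
      qv J (\<lambda>i. \<Sum>j<k. smult (c j) (x j i)) = qv J (\<lambda>i. 0) \<longrightarrow> (\<forall>j<k. c j = 0))"

definition qdim :: "('y, 'k::ring_1) ncpoly set \<Rightarrow> ('r \<Rightarrow> ('y, 'k) ncpoly) set set \<Rightarrow> enat" where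
  "qdim J S = Sup {enat k | k. \<exists>Xs. (\<forall>j<k. Xs j \<in> S) \<and> qindep J Xs k}"

text \<open>eta : (+)_i A[-\<delta>_i] -> (+)_i Abar[-\<delta>'_i], e_i |-> ebar_i t^(\<delta> i - \<delta>' i), applied to
  elements (classes mod I^r), with values classes mod Ibar^r.\<close>
definition eta :: "('x, 'k::ring_1) ncpoly set \<Rightarrow> ('r \<Rightarrow> nat) \<Rightarrow> ('r \<Rightarrow> nat)
    \<Rightarrow> ('r \<Rightarrow> ('x, 'k) ncpoly) set \<Rightarrow> ('r \<Rightarrow> ('x option, 'k) ncpoly) set" where
  "eta I \<delta> \<delta>' X = \<Union>{qv (gen_ideal (emb ` I)) (\<lambda>i. tpow (\<delta> i - \<delta>' i) * emb (x i)) | x. x \<in> X}"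

definition Hhom :: "('x, 'k::ring_1) ncpoly set \<Rightarrow> ('r \<Rightarrow> nat) \<Rightarrow> ('r \<Rightarrow> nat)
    \<Rightarrow> ('r \<Rightarrow> ('x, 'k) ncpoly) set set \<Rightarrow> ('r \<Rightarrow> ('x option, 'k) ncpoly) set set" where
  "Hhom I \<delta> \<delta>' M = gen_rsubmod (gen_ideal (emb ` I)) (eta I \<delta> \<delta>' ` M)"

definition tA :: "('x, 'k::ring_1) ncpoly set \<Rightarrow> ('r \<Rightarrow> nat) \<Rightarrow> ('r \<Rightarrow> nat)
    \<Rightarrow> ('r \<Rightarrow> ('x option, 'k) ncpoly) set set" where
  "tA I \<delta> \<delta>' = {qv (gen_ideal (emb ` I)) (\<lambda>i. tpow (\<delta> i - \<delta>' i) * emb (a i)) | a. True}"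

end

theory Submission
  imports Defs
begin


definition kmap :: "('a \<Rightarrow> 'b) \<Rightarrow> ('a \<Rightarrow>\<^sub>0 'k::comm_monoid_add) \<Rightarrow> ('b \<Rightarrow>\<^sub>0 'k)" where
  "kmap f p = (\<Sum>w\<in>Poly_Mapping.keys p. Poly_Mapping.single (f w) (Poly_Mapping.lookup p w))"

lemma kmap_superset:
  assumes "finite S" "Poly_Mapping.keys p \<subseteq> S"
  shows "kmap f p = (\<Sum>w\<in>S. Poly_Mapping.single (f w) (Poly_Mapping.lookup p w))"
  unfolding kmap_def
  by (rule sum.mono_neutral_left) (use assms in \<open>auto simp: in_keys_iff\<close>)

lemma kmap_add: "kmap f (p + q) = kmap f p + kmap f q"
proof -
  let ?S = "Poly_Mapping.keys p \<union> Poly_Mapping.keys q"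
  have "kmap f (p + q) = (\<Sum>w\<in>?S. Poly_Mapping.single (f w) (Poly_Mapping.lookup (p+q) w))"
    by (rule kmap_superset) (auto dest: subsetD[OF keys_add])
  also have "\<dots> = (\<Sum>w\<in>?S. Poly_Mapping.single (f w) (Poly_Mapping.lookup p w))
     + (\<Sum>w\<in>?S. Poly_Mapping.single (f w) (Poly_Mapping.lookup q w))"
    by (simp add: lookup_add single_add sum.distrib)
  also have "\<dots> = kmap f p + kmap f q"
    by (subst (1 2) kmap_superset[where S="?S"]) auto
  finally show ?thesis .
qed

lemma kmap_zero [simp]: "kmap f 0 = 0"
  by (simp add: kmap_def)

lemma kmap_single [simp]: "kmap f (Poly_Mapping.single w c) = Poly_Mapping.single (f w) c"
  by (simp add: kmap_def)

lemma kmap_sum: "kmap f (\<Sum>j\<in>A. g j) = (\<Sum>j\<in>A. kmap f (g j))"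
  by (induction A rule: infinite_finite_induct) (auto simp: kmap_add)

lemma kmap_uminus: "kmap f (- p) = - kmap f (p::'a \<Rightarrow>\<^sub>0 'k::ab_group_add)"
proof -
  have "kmap f (- p) + kmap f p = 0" by (simp flip: kmap_add)
  then show ?thesis by (simp add: eq_neg_iff_add_eq_0)
qed

lemma kmap_diff: "kmap f (p - q) = kmap f p - kmap f (q::'a \<Rightarrow>\<^sub>0 'k::ab_group_add)"
  by (simp only: diff_conv_add_uminus kmap_add kmap_uminus)

lemma expand: "p = (\<Sum>w\<in>Poly_Mapping.keys p. Poly_Mapping.single w (Poly_Mapping.lookup p w))"
proof (rule poly_mapping_eqI)
  fix v
  show "Poly_Mapping.lookup p v = Poly_Mapping.lookup (\<Sum>w\<in>Poly_Mapping.keys p. Poly_Mapping.single w (Poly_Mapping.lookup p w)) v"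
    by (simp add: lookup_sum lookup_single when_def in_keys_iff sum.delta' cong: if_cong)
qed

lemma kmap_id: "kmap id p = p"
  unfolding kmap_def by (simp flip: expand)

lemma kmap_comp: "kmap g (kmap f p) = kmap (g \<circ> f) p"
  by (simp add: kmap_def[of f] kmap_sum) (simp add: kmap_def)

lemma kmap_mult:
  assumes hom: "\<And>u v. f (u + v) = f u + f v"
  shows "kmap f (p * q) = kmap f p * kmap f (q::'a::monoid_add \<Rightarrow>\<^sub>0 'k::semiring_0)"
proof -
  have "p * q = (\<Sum>u\<in>Poly_Mapping.keys p. Poly_Mapping.single u (Poly_Mapping.lookup p u)) * (\<Sum>v\<in>Poly_Mapping.keys q. Poly_Mapping.single v (Poly_Mapping.lookup q v))"
    by (simp only: flip: expand)
  also have "\<dots> = (\<Sum>v\<in>Poly_Mapping.keys q. \<Sum>u\<in>Poly_Mapping.keys p.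
      Poly_Mapping.single (u + v) (Poly_Mapping.lookup p u * Poly_Mapping.lookup q v))"
    by (simp add: sum_distrib_left sum_distrib_right mult_single)
  finally have eq: "p * q = (\<Sum>v\<in>Poly_Mapping.keys q. \<Sum>u\<in>Poly_Mapping.keys p.
      Poly_Mapping.single (u + v) (Poly_Mapping.lookup p u * Poly_Mapping.lookup q v))" .
  have "kmap f (p * q) = (\<Sum>v\<in>Poly_Mapping.keys q. \<Sum>u\<in>Poly_Mapping.keys p.
      Poly_Mapping.single (f u + f v) (Poly_Mapping.lookup p u * Poly_Mapping.lookup q v))"
    by (subst eq) (simp add: kmap_sum hom)
  also have "\<dots> = kmap f p * kmap f q"
    by (simp add: kmap_def sum_distrib_left sum_distrib_right mult_single)
  finally show ?thesis .
qed

lemma keys_kmap: "Poly_Mapping.keys (kmap f p) \<subseteq> f ` Poly_Mapping.keys p"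
proof -
  have "Poly_Mapping.keys (kmap f p) \<subseteq> (\<Union>w\<in>Poly_Mapping.keys p. Poly_Mapping.keys (Poly_Mapping.single (f w) (Poly_Mapping.lookup p w)))"
    unfolding kmap_def by (rule keys_sum)
  also have "\<dots> \<subseteq> f ` Poly_Mapping.keys p" by auto
  finally show ?thesis .
qed



fun strip :: "'x option word \<Rightarrow> 'x word" where
  "strip (Wd u) = Wd (concat (map (\<lambda>z. case z of None \<Rightarrow> [] | Some x \<Rightarrow> [x]) u))"

definition embw :: "'x word \<Rightarrow> 'x option word" where
  "embw w = (case w of Wd u \<Rightarrow> Wd (map Some u))"

lemma strip_add: "strip (u + v) = strip u + strip v"
  by (cases u; cases v) simp

lemma embw_add: "embw (u + v) = embw u + embw v"
  by (cases u; cases v) (simp add: embw_def)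

lemma strip_embw [simp]: "strip (embw w) = w"
proof (cases w)
  case (Wd u) then show ?thesis by (induction u arbitrary: w) (auto simp: embw_def)
qed

lemma wlen_add: "wlen (u + v) = wlen u + wlen v"
  by (cases u; cases v) simp

lemma wlen_embw [simp]: "wlen (embw u) = wlen u"
  by (cases u) (simp add: embw_def)

lemma embw_zero [simp]: "embw 0 = 0"
  by (simp add: embw_def zero_word_def)

lemma strip_zero [simp]: "strip 0 = 0"
  by (simp add: zero_word_def)

lemma emb_kmap: "emb p = kmap embw p"
  by (simp add: emb_def kmap_def embw_def)

definition psi :: "('x option, 'k::ring_1) ncpoly \<Rightarrow> ('x, 'k) ncpoly" where
  "psi = kmap strip"

lemma emb_add: "emb (p + q) = emb p + emb q" by (simp add: emb_kmap kmap_add)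
lemma emb_diff: "emb (p - q) = emb p - emb q" by (simp add: emb_kmap kmap_diff)
lemma emb_uminus: "emb (- p) = - emb p" by (simp add: emb_kmap kmap_uminus)
lemma emb_zero [simp]: "emb 0 = 0" by (simp add: emb_kmap)
lemma emb_mult: "emb (p * q) = emb p * emb q" by (simp add: emb_kmap kmap_mult embw_add)
lemma emb_sum: "emb (\<Sum>j\<in>A. g j) = (\<Sum>j\<in>A. emb (g j))" by (simp add: emb_kmap kmap_sum)
lemma emb_single: "emb (Poly_Mapping.single w c) = Poly_Mapping.single (embw w) c" by (simp add: emb_kmap)

lemma psi_add: "psi (p + q) = psi p + psi q" by (simp add: psi_def kmap_add)
lemma psi_diff: "psi (p - q) = psi p - psi q" by (simp add: psi_def kmap_diff)
lemma psi_uminus: "psi (- p) = - psi p" by (simp add: psi_def kmap_uminus)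
lemma psi_zero [simp]: "psi 0 = 0" by (simp add: psi_def)
lemma psi_mult: "psi (p * q) = psi p * psi q" by (simp add: psi_def kmap_mult strip_add)
lemma psi_sum: "psi (\<Sum>j\<in>A. g j) = (\<Sum>j\<in>A. psi (g j))" by (simp add: psi_def kmap_sum)
lemma psi_single: "psi (Poly_Mapping.single w c) = Poly_Mapping.single (strip w) c" by (simp add: psi_def)

lemma psi_emb [simp]: "psi (emb p) = p"
proof -
  have e: "strip \<circ> embw = id" by auto
  show ?thesis by (simp only: psi_def emb_kmap kmap_comp e kmap_id)
qed

lemma strip_rep [simp]: "strip (Wd (replicate k None)) = 0"
  by (induction k) (auto simp: zero_word_def)

lemma psi_tpow [simp]: "psi (tpow k) = 1"
  by (simp add: tpow_def psi_single) (simp add: zero_word_def[symmetric])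

lemma psi_tpow_emb [simp]: "psi (tpow k * emb p) = p"
  by (simp add: psi_mult)

lemma psi_smult: "psi (smult c p) = smult c (psi p)"
  by (simp add: smult_def psi_mult psi_single)

lemma smult_comm: "Poly_Mapping.single 0 c * tpow k = tpow k * (Poly_Mapping.single 0 c :: ('x option,'k::field) ncpoly)"
  by (simp add: tpow_def mult_single mult.commute)

lemma smult_tpow_emb:
  "smult c (tpow k * emb p) = tpow k * emb (smult c (p::('x,'k::field) ncpoly))"
proof -
  have "smult c (tpow k * emb p) = (Poly_Mapping.single 0 c * tpow k) * emb p"
    by (simp add: smult_def mult.assoc)
  also have "\<dots> = tpow k * (Poly_Mapping.single 0 c * emb p)"
    by (simp add: smult_comm mult.assoc)
  also have "Poly_Mapping.single 0 c * emb p = emb (smult c p)"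
    by (simp add: smult_def emb_mult emb_single)
  finally show ?thesis .
qed

lemma sum_smult_tpow_emb:
  "(\<Sum>j\<in>A. smult (c j) (tpow k * emb (x j))) = tpow k * emb (\<Sum>j\<in>A. smult (c j) (x j :: ('x,'k::field) ncpoly))"
  by (simp add: smult_tpow_emb emb_sum sum_distrib_left)



lemma lookup_hcomp: "Poly_Mapping.lookup (hcomp d p) w = (if wlen w = d then Poly_Mapping.lookup p w else 0)"
proof -
  have "finite {w. (if wlen w = d then Poly_Mapping.lookup p w else 0) \<noteq> 0}"
    by (rule finite_subset[of _ "Poly_Mapping.keys p"]) (auto simp: in_keys_iff split: if_splits)
  then show ?thesis by (simp add: hcomp_def)
qed

lemma hcomp_add: "hcomp d (p + q) = hcomp d p + hcomp d q"
  by (rule poly_mapping_eqI) (simp add: lookup_hcomp lookup_add)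

lemma hcomp_zero [simp]: "hcomp d 0 = 0"
  by (rule poly_mapping_eqI) (simp add: lookup_hcomp)

lemma hcomp_diff: "hcomp d (p - q) = hcomp d p - hcomp d (q :: ('x,'k::ring_1) ncpoly)"
  by (rule poly_mapping_eqI) (simp add: lookup_hcomp lookup_minus)

lemma hcomp_sum: "hcomp d (\<Sum>j\<in>A. g j) = (\<Sum>j\<in>A. hcomp d (g j))"
  by (induction A rule: infinite_finite_induct) (auto simp: hcomp_add)

lemma hcomp_single: "hcomp d (Poly_Mapping.single u a) = (if wlen u = d then Poly_Mapping.single u a else 0)"
  by (rule poly_mapping_eqI) (simp add: lookup_hcomp lookup_single when_def)

lemma hm_single:
  "hcomp m (Poly_Mapping.single (u + v) (a * b)) =
   (\<Sum>k\<le>m. hcomp k (Poly_Mapping.single u a) * hcomp (m - k) (Poly_Mapping.single v (b::'k::ring_1)))"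
proof (cases "wlen u + wlen v = m")
  case True
  have "(\<Sum>k\<le>m. hcomp k (Poly_Mapping.single u a) * hcomp (m - k) (Poly_Mapping.single v b))
      = (\<Sum>k\<le>m. if k = wlen u then Poly_Mapping.single (u + v) (a * b) else 0)"
    by (rule sum.cong) (use True in \<open>auto simp: hcomp_single mult_single\<close>)
  also have "\<dots> = Poly_Mapping.single (u + v) (a * b)"
    using True by simp
  finally show ?thesis using True by (simp add: hcomp_single wlen_add)
next
  case False
  have "(\<Sum>k\<le>m. hcomp k (Poly_Mapping.single u a) * hcomp (m - k) (Poly_Mapping.single v b)) = 0"
    by (rule sum.neutral) (use False in \<open>auto simp: hcomp_single\<close>)
  then show ?thesis using False by (simp add: hcomp_single wlen_add)
qed

lemma prod_expand:
  "p * q = (\<Sum>v\<in>Poly_Mapping.keys q. \<Sum>u\<in>Poly_Mapping.keys p.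
      Poly_Mapping.single (u + v) (Poly_Mapping.lookup p u * Poly_Mapping.lookup q v))"
proof -
  have "p * q = (\<Sum>u\<in>Poly_Mapping.keys p. Poly_Mapping.single u (Poly_Mapping.lookup p u)) * (\<Sum>v\<in>Poly_Mapping.keys q. Poly_Mapping.single v (Poly_Mapping.lookup q v))"
    by (simp only: flip: expand)
  also have "\<dots> = (\<Sum>v\<in>Poly_Mapping.keys q. \<Sum>u\<in>Poly_Mapping.keys p.
      Poly_Mapping.single (u + v) (Poly_Mapping.lookup p u * Poly_Mapping.lookup q v))"
    by (simp add: sum_distrib_left sum_distrib_right mult_single)
  finally show ?thesis .
qed

lemma hcomp_mult_expand:
  "hcomp k p * hcomp l q = (\<Sum>v\<in>Poly_Mapping.keys q. \<Sum>u\<in>Poly_Mapping.keys p.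
     hcomp k (Poly_Mapping.single u (Poly_Mapping.lookup p u)) * hcomp l (Poly_Mapping.single v (Poly_Mapping.lookup q (v::'x word)::'k::ring_1)))"
proof -
  have "hcomp k p * hcomp l q = hcomp k (\<Sum>u\<in>Poly_Mapping.keys p. Poly_Mapping.single u (Poly_Mapping.lookup p u)) * hcomp l (\<Sum>v\<in>Poly_Mapping.keys q. Poly_Mapping.single v (Poly_Mapping.lookup q v))"
    by (simp only: flip: expand)
  then show ?thesis by (simp add: hcomp_sum sum_distrib_left sum_distrib_right)
qed

lemma hcomp_mult:
  "hcomp m (p * q) = (\<Sum>k\<le>m. hcomp k p * hcomp (m - k) (q :: ('x,'k::ring_1) ncpoly))"
proof -
  have "hcomp m (p * q) = (\<Sum>v\<in>Poly_Mapping.keys q. \<Sum>u\<in>Poly_Mapping.keys p.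
      hcomp m (Poly_Mapping.single (u + v) (Poly_Mapping.lookup p u * Poly_Mapping.lookup q v)))"
    by (subst prod_expand) (simp add: hcomp_sum)
  also have "\<dots> = (\<Sum>v\<in>Poly_Mapping.keys q. \<Sum>u\<in>Poly_Mapping.keys p. \<Sum>k\<le>m.
      hcomp k (Poly_Mapping.single u (Poly_Mapping.lookup p u)) * hcomp (m - k) (Poly_Mapping.single v (Poly_Mapping.lookup q v)))"
    by (simp only: hm_single)
  also have "\<dots> = (\<Sum>v\<in>Poly_Mapping.keys q. \<Sum>k\<le>m. \<Sum>u\<in>Poly_Mapping.keys p.
      hcomp k (Poly_Mapping.single u (Poly_Mapping.lookup p u)) * hcomp (m - k) (Poly_Mapping.single v (Poly_Mapping.lookup q v)))"
    by (rule sum.cong[OF refl], rule sum.swap)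
  also have "\<dots> = (\<Sum>k\<le>m. \<Sum>v\<in>Poly_Mapping.keys q. \<Sum>u\<in>Poly_Mapping.keys p.
      hcomp k (Poly_Mapping.single u (Poly_Mapping.lookup p u)) * hcomp (m - k) (Poly_Mapping.single v (Poly_Mapping.lookup q v)))"
    by (rule sum.swap)
  also have "\<dots> = (\<Sum>k\<le>m. hcomp k p * hcomp (m - k) q)"
    by (rule sum.cong[OF refl]) (rule hcomp_mult_expand[symmetric])
  finally show ?thesis .
qed

definition rho :: "nat \<Rightarrow> ('x option, 'k::ring_1) ncpoly \<Rightarrow> ('x, 'k) ncpoly" where
  "rho m p = psi (hcomp m p)"

lemma rho_add: "rho m (p + q) = rho m p + rho m q" by (simp add: rho_def hcomp_add psi_add)
lemma rho_diff: "rho m (p - q) = rho m p - rho m q" by (simp add: rho_def hcomp_diff psi_diff)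
lemma rho_zero [simp]: "rho m 0 = 0" by (simp add: rho_def)
lemma rho_uminus: "rho m (- p) = - rho m p" by (metis diff_0 rho_diff rho_zero)

lemma rho_mult: "rho m (p * q) = (\<Sum>k\<le>m. rho k p * rho (m - k) q)"
  by (simp add: rho_def hcomp_mult psi_sum psi_mult)

lemma emb_hcomp: "hcomp m (emb a) = emb (hcomp m a)"
proof -
  have "hcomp m (emb a) = hcomp m (emb (\<Sum>u\<in>Poly_Mapping.keys a. Poly_Mapping.single u (Poly_Mapping.lookup a u)))"
    by (simp only: flip: expand)
  also have "\<dots> = emb (hcomp m (\<Sum>u\<in>Poly_Mapping.keys a. Poly_Mapping.single u (Poly_Mapping.lookup a u)))"
    by (simp add: emb_sum hcomp_sum emb_single hcomp_single) (rule sum.cong, auto simp: emb_single)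
  also have "\<dots> = emb (hcomp m a)" by (simp only: flip: expand)
  finally show ?thesis .
qed

lemma rho_emb: "rho m (emb a) = hcomp m a"
  by (simp add: rho_def emb_hcomp)

lemma wlen_rep [simp]: "wlen (Wd (replicate c None)) = c" by simp

lemma rho_tpow: "rho l (tpow c :: ('x option, 'k::ring_1) ncpoly) = (if l = c then 1 else 0)"
  by (simp add: rho_def tpow_def hcomp_single)
     (metis psi_tpow tpow_def)

lemma rho_tpow_emb: "rho (c + k) (tpow c * emb x) = hcomp k x"
proof -
  have "rho (c + k) (tpow c * emb x) = (\<Sum>l\<le>c+k. rho l (tpow c) * rho (c + k - l) (emb x))"
    by (rule rho_mult)
  also have "\<dots> = (\<Sum>l\<le>c+k. if l = c then rho k (emb x) else 0)"
    by (rule sum.cong) (auto simp: rho_tpow)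
  also have "\<dots> = rho k (emb x)" by simp
  finally show ?thesis by (simp add: rho_emb)
qed

lemma hom_mult: "hom a p \<Longrightarrow> hom b q \<Longrightarrow> hom (a + b) (p * q)"
  unfolding hom_def using keys_mult[of p q] by (auto simp: wlen_add)

lemma hom_emb: "hom a p \<Longrightarrow> hom a (emb p)"
  unfolding hom_def emb_kmap using keys_kmap[of embw p] by auto

lemma hom_tpow: "hom k (tpow k)"
  by (simp add: hom_def tpow_def)

lemma hom_zero [simp]: "hom k 0"
  by (simp add: hom_def)

lemma hom_hcomp: "hom d (hcomp d p)"
  unfolding hom_def by (auto simp: in_keys_iff lookup_hcomp split: if_splits)

lemma hcomp_hom_other: "hom e w \<Longrightarrow> m \<noteq> e \<Longrightarrow> hcomp m w = 0"
  unfolding hom_def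
  by (rule poly_mapping_eqI) (auto simp: lookup_hcomp in_keys_iff)

lemma lookup_sum_hcomp:
  "finite S \<Longrightarrow> Poly_Mapping.lookup (\<Sum>k\<in>S. hcomp k p) w = (if wlen w \<in> S then Poly_Mapping.lookup p w else 0)"
proof -
  assume S: "finite S"
  have "Poly_Mapping.lookup (\<Sum>k\<in>S. hcomp k p) w = (\<Sum>k\<in>S. if wlen w = k then Poly_Mapping.lookup p w else 0)"
    by (simp add: lookup_sum lookup_hcomp)
  also have "\<dots> = (if wlen w \<in> S then Poly_Mapping.lookup p w else 0)"
    using S by (rule sum.delta')
  finally show ?thesis .
qed

lemma hcomp_decomp:
  "p - hcomp e p = (\<Sum>k\<in>wlen ` Poly_Mapping.keys p - {e}. hcomp k (p::('x,'k::ring_1) ncpoly))"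
proof (rule poly_mapping_eqI)
  fix w
  have fin: "finite (wlen ` Poly_Mapping.keys p - {e})" by simp
  show "Poly_Mapping.lookup (p - hcomp e p) w = Poly_Mapping.lookup (\<Sum>k\<in>wlen ` Poly_Mapping.keys p - {e}. hcomp k p) w"
    unfolding lookup_sum_hcomp[OF fin] lookup_minus lookup_hcomp
  proof (cases "w \<in> Poly_Mapping.keys p")
    case True
    then have "wlen w \<in> wlen ` Poly_Mapping.keys p" by blast
    then show "Poly_Mapping.lookup p w - (if wlen w = e then Poly_Mapping.lookup p w else 0) =
      (if wlen w \<in> wlen ` Poly_Mapping.keys p - {e} then Poly_Mapping.lookup p w else 0)" by auto
  next
    case False
    then have "Poly_Mapping.lookup p w = 0" by (simp add: in_keys_iff)
    then show "Poly_Mapping.lookup p w - (if wlen w = e then Poly_Mapping.lookup p w else 0) =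
      (if wlen w \<in> wlen ` Poly_Mapping.keys p - {e} then Poly_Mapping.lookup p w else 0)" by auto
  qed
qed

lemma hcomp_full:
  "p = (\<Sum>k\<in>wlen ` Poly_Mapping.keys p. hcomp k (p::('x,'k::ring_1) ncpoly))"
proof (rule poly_mapping_eqI)
  fix w
  have fin: "finite (wlen ` Poly_Mapping.keys p)" by simp
  show "Poly_Mapping.lookup p w = Poly_Mapping.lookup (\<Sum>k\<in>wlen ` Poly_Mapping.keys p. hcomp k p) w"
    unfolding lookup_sum_hcomp[OF fin]
  proof (cases "w \<in> Poly_Mapping.keys p")
    case True
    then have "wlen w \<in> wlen ` Poly_Mapping.keys p" by blast
    then show "Poly_Mapping.lookup p w = (if wlen w \<in> wlen ` Poly_Mapping.keys p then Poly_Mapping.lookup p w else 0)" by auto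
  next
    case False
    then have "Poly_Mapping.lookup p w = 0" by (simp add: in_keys_iff)
    then show "Poly_Mapping.lookup p w = (if wlen w \<in> wlen ` Poly_Mapping.keys p then Poly_Mapping.lookup p w else 0)" by auto
  qed
qed



lemma ideal_0: "twosided_ideal J \<Longrightarrow> 0 \<in> J" by (simp add: twosided_ideal_def)
lemma ideal_add: "twosided_ideal J \<Longrightarrow> p \<in> J \<Longrightarrow> q \<in> J \<Longrightarrow> p + q \<in> J" by (simp add: twosided_ideal_def)
lemma ideal_uminus: "twosided_ideal J \<Longrightarrow> p \<in> J \<Longrightarrow> - p \<in> J" by (simp add: twosided_ideal_def)
lemma ideal_diff: "twosided_ideal J \<Longrightarrow> p \<in> J \<Longrightarrow> q \<in> J \<Longrightarrow> p - q \<in> J"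
  by (metis diff_conv_add_uminus ideal_add ideal_uminus)
lemma ideal_mult: "twosided_ideal J \<Longrightarrow> p \<in> J \<Longrightarrow> a * p * b \<in> J" by (simp add: twosided_ideal_def)
lemma ideal_lmult: "twosided_ideal J \<Longrightarrow> p \<in> J \<Longrightarrow> a * p \<in> J" by (metis ideal_mult mult_1_right)
lemma ideal_rmult: "twosided_ideal J \<Longrightarrow> p \<in> J \<Longrightarrow> p * b \<in> J" by (metis ideal_mult mult_1_left)
lemma ideal_sum: "twosided_ideal J \<Longrightarrow> (\<And>j. j \<in> A \<Longrightarrow> f j \<in> J) \<Longrightarrow> sum f A \<in> J"
  by (induction A rule: infinite_finite_induct) (auto simp: ideal_0 ideal_add)

lemma gen_ideal_ideal: "twosided_ideal (gen_ideal S)"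
  unfolding gen_ideal_def twosided_ideal_def by auto

lemma gen_ideal_sub: "S \<subseteq> gen_ideal S"
  unfolding gen_ideal_def by auto

lemma gen_ideal_least: "twosided_ideal K \<Longrightarrow> S \<subseteq> K \<Longrightarrow> gen_ideal S \<subseteq> K"
  unfolding gen_ideal_def by auto

lemma psi_J:
  assumes I: "twosided_ideal I" and p: "p \<in> gen_ideal (emb ` I)"
  shows "psi p \<in> I"
proof -
  let ?K = "{p. psi p \<in> I}"
  have "twosided_ideal ?K"
    unfolding twosided_ideal_def
    by (auto simp: psi_add psi_uminus psi_mult ideal_0[OF I] ideal_add[OF I] ideal_uminus[OF I] ideal_mult[OF I])
  moreover have "emb ` I \<subseteq> ?K" by auto
  ultimately have "gen_ideal (emb ` I) \<subseteq> ?K" by (rule gen_ideal_least)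
  then show ?thesis using p by auto
qed

lemma rho_J:
  assumes I: "graded_ideal I" and p: "p \<in> gen_ideal (emb ` I)"
  shows "rho m p \<in> I"
proof -
  have I2: "twosided_ideal I" using I by (simp add: graded_ideal_def)
  let ?K = "{p. \<forall>m. rho m p \<in> I}"
  have mul: "rho m (a * p * b) \<in> I" if "\<forall>m. rho m p \<in> I" for a p b m
  proof -
    have "rho m (a * p * b) = (\<Sum>k\<le>m. (\<Sum>l\<le>k. rho l a * rho (k - l) p) * rho (m - k) b)"
      by (simp add: rho_mult)
    also have "\<dots> = (\<Sum>k\<le>m. \<Sum>l\<le>k. rho l a * rho (k - l) p * rho (m - k) b)"
      by (simp add: sum_distrib_right)
    also have "\<dots> \<in> I"
      by (intro ideal_sum[OF I2] ideal_mult[OF I2]) (use that in auto)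
    finally show ?thesis .
  qed
  have "twosided_ideal ?K"
    unfolding twosided_ideal_def
    by (auto simp: rho_add rho_uminus ideal_0[OF I2] ideal_add[OF I2] ideal_uminus[OF I2] mul)
  moreover have "emb ` I \<subseteq> ?K" using I by (auto simp: rho_emb graded_ideal_def)
  ultimately have "gen_ideal (emb ` I) \<subseteq> ?K" by (rule gen_ideal_least)
  then show ?thesis using p by auto
qed

lemma qv_self: "twosided_ideal J \<Longrightarrow> v \<in> qv J v"
  by (simp add: qv_def ideal_0)

lemma qv_eq: "twosided_ideal J \<Longrightarrow> (qv J v = qv J w) \<longleftrightarrow> (\<forall>i. v i - w i \<in> J)"
proof
  assume J: "twosided_ideal J" and "qv J v = qv J w"
  then have "w \<in> qv J v" using qv_self by metis
  then have "\<forall>i. w i - v i \<in> J" by (simp add: qv_def)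
  then show "\<forall>i. v i - w i \<in> J" using ideal_uminus[OF J] by (metis minus_diff_eq)
next
  assume J: "twosided_ideal J" and h: "\<forall>i. v i - w i \<in> J"
  show "qv J v = qv J w"
  proof (rule set_eqI)
    fix x
    show "x \<in> qv J v \<longleftrightarrow> x \<in> qv J w"
    proof
      assume "x \<in> qv J v"
      then have xv: "x i - v i \<in> J" for i by (simp add: qv_def)
      have "x i - w i \<in> J" for i
      proof -
        have "x i - w i = (x i - v i) + (v i - w i)" by simp
        also have "\<dots> \<in> J" using xv h ideal_add[OF J] by blast
        finally show ?thesis .
      qed
      then show "x \<in> qv J w" by (simp add: qv_def)
    next
      assume "x \<in> qv J w"
      then have xw: "x i - w i \<in> J" for i by (simp add: qv_def)
      have "x i - v i \<in> J" for i
      proof -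
        have "x i - v i = (x i - w i) - (v i - w i)" by simp
        also have "\<dots> \<in> J" using xw h ideal_diff[OF J] by blast
        finally show ?thesis .
      qed
      then show "x \<in> qv J v" by (simp add: qv_def)
    qed
  qed
qed

lemma qv_mem: assumes J: "twosided_ideal J" and x: "x \<in> qv J v" shows "qv J x = qv J v"
proof -
  from x have "\<forall>i. x i - v i \<in> J" by (simp add: qv_def)
  then show ?thesis by (simp add: qv_eq[OF J])
qed

lemma qadd_qv:
  assumes J: "twosided_ideal J"
  shows "qadd J (qv J x) (qv J y) = qv J (\<lambda>i. x i + y i)"
proof -
  have "{qv J (\<lambda>i. x' i + y' i) | x' y'. x' \<in> qv J x \<and> y' \<in> qv J y} = {qv J (\<lambda>i. x i + y i)}"
  proof (rule set_eqI, rule iffI)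
    fix Z assume "Z \<in> {qv J (\<lambda>i. x' i + y' i) | x' y'. x' \<in> qv J x \<and> y' \<in> qv J y}"
    then obtain x' y' where Z: "Z = qv J (\<lambda>i. x' i + y' i)" and "x' \<in> qv J x" "y' \<in> qv J y" by blast
    then have "\<forall>i. x' i - x i \<in> J" "\<forall>i. y' i - y i \<in> J" by (auto simp: qv_def)
    then have "\<forall>i. (x' i + y' i) - (x i + y i) \<in> J"
      by (metis (no_types, lifting) J add_diff_add ideal_add)
    then show "Z \<in> {qv J (\<lambda>i. x i + y i)}" using Z qv_eq[OF J] by auto
  next
    fix Z assume "Z \<in> {qv J (\<lambda>i. x i + y i)}"
    then show "Z \<in> {qv J (\<lambda>i. x' i + y' i) | x' y'. x' \<in> qv J x \<and> y' \<in> qv J y}"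
      using qv_self[OF J] by blast
  qed
  then show ?thesis unfolding qadd_def by simp
qed

lemma qrmult_qv:
  assumes J: "twosided_ideal J"
  shows "qrmult J (qv J x) p = qv J (\<lambda>i. x i * p)"
proof -
  have "{qv J (\<lambda>i. x' i * p) | x'. x' \<in> qv J x} = {qv J (\<lambda>i. x i * p)}"
  proof (rule set_eqI, rule iffI)
    fix Z assume "Z \<in> {qv J (\<lambda>i. x' i * p) | x'. x' \<in> qv J x}"
    then obtain x' where Z: "Z = qv J (\<lambda>i. x' i * p)" and "x' \<in> qv J x" by blast
    then have "\<forall>i. x' i - x i \<in> J" by (auto simp: qv_def)
    then have "\<forall>i. x' i * p - x i * p \<in> J"
      by (metis J ideal_rmult left_diff_distrib)
    then show "Z \<in> {qv J (\<lambda>i. x i * p)}" using Z qv_eq[OF J] by auto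
  next
    fix Z assume "Z \<in> {qv J (\<lambda>i. x i * p)}"
    then show "Z \<in> {qv J (\<lambda>i. x' i * p) | x'. x' \<in> qv J x}"
      using qv_self[OF J] by blast
  qed
  then show ?thesis unfolding qrmult_def by simp
qed

lemma eta_qv:
  assumes I: "twosided_ideal I"
  shows "eta I \<delta> \<delta>' (qv I x) = qv (gen_ideal (emb ` I)) (\<lambda>i. tpow (\<delta> i - \<delta>' i) * emb (x i))"
proof -
  let ?J = "gen_ideal (emb ` I)"
  have J: "twosided_ideal ?J" by (rule gen_ideal_ideal)
  have "{qv ?J (\<lambda>i. tpow (\<delta> i - \<delta>' i) * emb (y i)) | y. y \<in> qv I x} = {qv ?J (\<lambda>i. tpow (\<delta> i - \<delta>' i) * emb (x i))}"
  proof (rule set_eqI, rule iffI)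
    fix Z assume "Z \<in> {qv ?J (\<lambda>i. tpow (\<delta> i - \<delta>' i) * emb (y i)) | y. y \<in> qv I x}"
    then obtain y where Z: "Z = qv ?J (\<lambda>i. tpow (\<delta> i - \<delta>' i) * emb (y i))" and "y \<in> qv I x" by blast
    then have "\<forall>i. y i - x i \<in> I" by (auto simp: qv_def)
    then have "\<forall>i. emb (y i - x i) \<in> ?J" using gen_ideal_sub by blast
    then have "\<forall>i. tpow (\<delta> i - \<delta>' i) * emb (y i) - tpow (\<delta> i - \<delta>' i) * emb (x i) \<in> ?J"
      by (metis J emb_diff ideal_lmult right_diff_distrib)
    then show "Z \<in> {qv ?J (\<lambda>i. tpow (\<delta> i - \<delta>' i) * emb (x i))}" using Z qv_eq[OF J] by auto
  next
    fix Z assume "Z \<in> {qv ?J (\<lambda>i. tpow (\<delta> i - \<delta>' i) * emb (x i))}"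
    then show "Z \<in> {qv ?J (\<lambda>i. tpow (\<delta> i - \<delta>' i) * emb (y i)) | y. y \<in> qv I x}"
      using qv_self[OF I] by blast
  qed
  then show ?thesis unfolding eta_def by simp
qed



lemma part1:
  assumes I: "twosided_ideal I" and M: "rsubmod I M"
  shows "eta I \<delta> \<delta>' ` M = Hhom I \<delta> \<delta>' M \<inter> tA I \<delta> \<delta>'"
proof -
  let ?J = "gen_ideal (emb ` I)"
  have J: "twosided_ideal ?J" by (rule gen_ideal_ideal)
  have Mr: "M \<subseteq> range (qv I)" and M0: "qv I (\<lambda>i. 0) \<in> M"
    and Madd: "\<And>X Y. X \<in> M \<Longrightarrow> Y \<in> M \<Longrightarrow> qadd I X Y \<in> M"
    and Mmul: "\<And>X p. X \<in> M \<Longrightarrow> qrmult I X p \<in> M"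
    using M by (auto simp: rsubmod_def)
  define N where "N = {Y. \<exists>y. Y = qv ?J y \<and> qv I (\<lambda>i. psi (y i)) \<in> M}"
  have wd: "qv I (\<lambda>i. psi (y i)) \<in> M" if "qv ?J y \<in> N" for y
  proof -
    have "\<exists>y'. qv ?J y = qv ?J y' \<and> qv I (\<lambda>i. psi (y' i)) \<in> M"
      using that by (simp add: N_def)
    then obtain y' where e: "qv ?J y = qv ?J y'" and m: "qv I (\<lambda>i. psi (y' i)) \<in> M"
      by blast
    have "\<forall>i. y i - y' i \<in> ?J" using e by (simp add: qv_eq[OF J])
    then have "\<forall>i. psi (y i) - psi (y' i) \<in> I" using psi_J[OF I] by (simp flip: psi_diff)
    then have "qv I (\<lambda>i. psi (y i)) = qv I (\<lambda>i. psi (y' i))" by (simp add: qv_eq[OF I])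
    then show ?thesis using m by simp
  qed
  have "rsubmod ?J N"
    unfolding rsubmod_def
  proof (intro conjI ballI allI)
    show "N \<subseteq> range (qv ?J)" unfolding N_def by auto
    show "qv ?J (\<lambda>i. 0) \<in> N" unfolding N_def using M0 by auto
  next
    fix X Y assume X: "X \<in> N" and Y: "Y \<in> N"
    then obtain x y where x: "X = qv ?J x" "qv I (\<lambda>i. psi (x i)) \<in> M"
      and y: "Y = qv ?J y" "qv I (\<lambda>i. psi (y i)) \<in> M" unfolding N_def by blast
    have "qadd ?J X Y = qv ?J (\<lambda>i. x i + y i)" using x y qadd_qv[OF J] by simp
    moreover have "qv I (\<lambda>i. psi (x i + y i)) \<in> M"
      using Madd[OF x(2) y(2)] by (simp add: qadd_qv[OF I] psi_add)
    ultimately show "qadd ?J X Y \<in> N" unfolding N_def by blast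
  next
    fix X p assume X: "X \<in> N"
    then obtain x where x: "X = qv ?J x" "qv I (\<lambda>i. psi (x i)) \<in> M"
      unfolding N_def by blast
    have "qrmult ?J X p = qv ?J (\<lambda>i. x i * p)" using x qrmult_qv[OF J] by simp
    moreover have "qv I (\<lambda>i. psi (x i * p)) \<in> M"
      using Mmul[OF x(2), of "psi p"] by (simp add: qrmult_qv[OF I] psi_mult)
    ultimately show "qrmult ?J X p \<in> N" unfolding N_def by blast
  qed
  moreover have gen: "eta I \<delta> \<delta>' ` M \<subseteq> N"
  proof
    fix Z assume "Z \<in> eta I \<delta> \<delta>' ` M"
    then obtain X where X: "X \<in> M" and Z: "Z = eta I \<delta> \<delta>' X" by blast
    obtain x where x: "X = qv I x" using X Mr by blast
    have "Z = qv ?J (\<lambda>i. tpow (\<delta> i - \<delta>' i) * emb (x i))" using Z x eta_qv[OF I] by simp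
    moreover have "qv I (\<lambda>i. psi (tpow (\<delta> i - \<delta>' i) * emb (x i))) \<in> M" using X x by simp
    ultimately show "Z \<in> N" unfolding N_def by blast
  qed
  ultimately have HN: "Hhom I \<delta> \<delta>' M \<subseteq> N"
    unfolding Hhom_def gen_rsubmod_def by (intro Inter_lower CollectI conjI)
  show ?thesis
  proof (rule set_eqI, rule iffI)
    fix Z assume "Z \<in> eta I \<delta> \<delta>' ` M"
    then obtain X where X: "X \<in> M" and Z: "Z = eta I \<delta> \<delta>' X" by blast
    obtain x where x: "X = qv I x" using X Mr by blast
    have "Z \<in> Hhom I \<delta> \<delta>' M" unfolding Hhom_def gen_rsubmod_def
    proof (rule InterI)
      fix N' assume "N' \<in> {N. rsubmod ?J N \<and> eta I \<delta> \<delta>' ` M \<subseteq> N}"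
      then have "eta I \<delta> \<delta>' ` M \<subseteq> N'" by blast
      then show "Z \<in> N'" using X Z by blast
    qed
    moreover have Zq: "Z = qv ?J (\<lambda>i. tpow (\<delta> i - \<delta>' i) * emb (x i))" using Z x eta_qv[OF I] by simp
    moreover have "Z \<in> tA I \<delta> \<delta>'" unfolding tA_def Zq by blast
    ultimately show "Z \<in> Hhom I \<delta> \<delta>' M \<inter> tA I \<delta> \<delta>'" by blast
  next
    fix Z assume Z: "Z \<in> Hhom I \<delta> \<delta>' M \<inter> tA I \<delta> \<delta>'"
    then obtain a where a: "Z = qv ?J (\<lambda>i. tpow (\<delta> i - \<delta>' i) * emb (a i))"
      unfolding tA_def by blast
    have "Z \<in> N" using Z HN by blast
    then have "qv I (\<lambda>i. psi (tpow (\<delta> i - \<delta>' i) * emb (a i))) \<in> M" using wd a by blast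
    then have "qv I a \<in> M" by simp
    moreover have "eta I \<delta> \<delta>' (qv I a) = Z" using a eta_qv[OF I] by simp
    ultimately show "Z \<in> eta I \<delta> \<delta>' ` M" by blast
  qed
qed

lemma homv_eta:
  assumes v: "homv \<delta> d v" and le: "\<And>i. \<delta>' i \<le> \<delta> i"
  shows "homv \<delta>' d (\<lambda>i. tpow (\<delta> i - \<delta>' i) * emb (v i))"
  unfolding homv_def
proof
  fix i
  show "if \<delta>' i \<le> d then hom (d - \<delta>' i) (tpow (\<delta> i - \<delta>' i) * emb (v i)) else tpow (\<delta> i - \<delta>' i) * emb (v i) = 0"
  proof (cases "\<delta> i \<le> d")
    case True
    then have "hom (d - \<delta> i) (v i)" using v by (simp add: homv_def)
    then have "hom ((\<delta> i - \<delta>' i) + (d - \<delta> i)) (tpow (\<delta> i - \<delta>' i) * emb (v i))"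
      by (intro hom_mult hom_tpow hom_emb)
    moreover have "(\<delta> i - \<delta>' i) + (d - \<delta> i) = d - \<delta>' i" using True le[of i] by simp
    ultimately show ?thesis using True le[of i] by simp
  next
    case False
    then have "v i = 0" using v by (simp add: homv_def)
    then show ?thesis by simp
  qed
qed

lemma homrep:
  assumes I: "graded_ideal I" and le: "\<And>i. \<delta>' i \<le> \<delta> i"
    and e: "eta I \<delta> \<delta>' (qv I x) = qv (gen_ideal (emb ` I)) w" and w: "homv \<delta>' d w"
  shows "\<exists>v. homv \<delta> d v \<and> qv I x = qv I v"
proof -
  let ?J = "gen_ideal (emb ` I)"
  have I2: "twosided_ideal I" using I by (simp add: graded_ideal_def)
  have J: "twosided_ideal ?J" by (rule gen_ideal_ideal)
  have "qv ?J (\<lambda>i. tpow (\<delta> i - \<delta>' i) * emb (x i)) = qv ?J w" using e by (simp add: eta_qv[OF I2])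
  then have diff: "\<forall>i. tpow (\<delta> i - \<delta>' i) * emb (x i) - w i \<in> ?J" by (simp add: qv_eq[OF J])
  define v where "v = (\<lambda>i. if \<delta> i \<le> d then hcomp (d - \<delta> i) (x i) else 0)"
  have hv: "homv \<delta> d v" unfolding homv_def v_def by (auto simp: hom_hcomp)
  have hk: "hcomp k (x i) \<in> I" if nk: "\<not> (\<delta> i \<le> d \<and> k = d - \<delta> i)" for i k
  proof -
    have r: "rho (\<delta> i - \<delta>' i + k) (tpow (\<delta> i - \<delta>' i) * emb (x i) - w i) \<in> I"
      using rho_J[OF I] diff by blast
    have "rho (\<delta> i - \<delta>' i + k) (w i) = 0"
    proof (cases "\<delta>' i \<le> d")
      case True
      then have "hom (d - \<delta>' i) (w i)" using w by (simp add: homv_def)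
      moreover have "\<delta> i - \<delta>' i + k \<noteq> d - \<delta>' i" using True nk le[of i] by auto
      ultimately show ?thesis by (simp add: rho_def hcomp_hom_other)
    next
      case False then have "w i = 0" using w by (simp add: homv_def)
      then show ?thesis by simp
    qed
    then show ?thesis using r by (simp add: rho_diff rho_tpow_emb)
  qed
  have "x i - v i \<in> I" for i
  proof (cases "\<delta> i \<le> d")
    case True
    then have "x i - v i = x i - hcomp (d - \<delta> i) (x i)" by (simp add: v_def)
    also have "\<dots> = (\<Sum>k\<in>wlen ` Poly_Mapping.keys (x i) - {d - \<delta> i}. hcomp k (x i))" by (rule hcomp_decomp)
    also have "\<dots> \<in> I" by (rule ideal_sum[OF I2]) (use hk in auto)
    finally show ?thesis .
  next
    case False
    then have "x i - v i = x i" by (simp add: v_def)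
    also have "\<dots> = (\<Sum>k\<in>wlen ` Poly_Mapping.keys (x i). hcomp k (x i))" by (rule hcomp_full)
    also have "\<dots> \<in> I" by (rule ideal_sum[OF I2]) (use hk False in auto)
    finally show ?thesis .
  qed
  then have "qv I x = qv I v" by (simp add: qv_eq[OF I2])
  with hv show ?thesis by blast
qed



lemma dir1:
  assumes I: "twosided_ideal I" and le: "\<And>i. \<delta>' i \<le> \<delta> i"
    and Xs: "\<forall>j<k. Xs j \<in> hpart I \<delta> d M" and ind: "qindep I Xs k"
  shows "\<exists>Ys. (\<forall>j<k. Ys j \<in> hpart (gen_ideal (emb ` I)) \<delta>' d (eta I \<delta> \<delta>' ` M)) \<and> qindep (gen_ideal (emb ` I)) Ys k"
proof -
  let ?J = "gen_ideal (emb ` I)"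
  have J: "twosided_ideal ?J" by (rule gen_ideal_ideal)
  have "\<forall>j\<in>{..<k}. \<exists>v. homv \<delta> d v \<and> Xs j = qv I v" using Xs by (auto simp: hpart_def)
  from bchoice[OF this] obtain V where V: "\<forall>j\<in>{..<k}. homv \<delta> d (V j) \<and> Xs j = qv I (V j)" by blast
  define Ys where "Ys j = eta I \<delta> \<delta>' (Xs j)" for j
  have Yq: "Ys j = qv ?J (\<lambda>i. tpow (\<delta> i - \<delta>' i) * emb (V j i))" if "j<k" for j
    using V that by (simp add: Ys_def eta_qv[OF I])
  have "Ys j \<in> hpart ?J \<delta>' d (eta I \<delta> \<delta>' ` M)" if "j<k" for j
  proof -
    have "Xs j \<in> M" using Xs that by (simp add: hpart_def)
    then have "Ys j \<in> eta I \<delta> \<delta>' ` M" by (simp add: Ys_def)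
    moreover have "homv \<delta>' d (\<lambda>i. tpow (\<delta> i - \<delta>' i) * emb (V j i))"
      by (rule homv_eta) (use V that le in auto)
    ultimately show ?thesis using Yq[OF that] unfolding hpart_def by blast
  qed
  moreover have "qindep ?J Ys k"
    unfolding qindep_def
  proof (rule allI, rule allI, rule impI, rule impI)
    fix y c
    assume y: "\<forall>j<k. y j \<in> Ys j" and z: "qv ?J (\<lambda>i. \<Sum>j<k. smult (c j) (y j i)) = qv ?J (\<lambda>i. 0)"
    define x where "x j = (\<lambda>i. psi (y j i))" for j
    have xX: "\<forall>j<k. x j \<in> Xs j"
    proof (intro allI impI)
      fix j assume j: "j < k"
      have "y j \<in> qv ?J (\<lambda>i. tpow (\<delta> i - \<delta>' i) * emb (V j i))" using y Yq j by auto
      then have "\<forall>i. y j i - tpow (\<delta> i - \<delta>' i) * emb (V j i) \<in> ?J" by (simp add: qv_def)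
      then have "\<forall>i. psi (y j i) - V j i \<in> I" using psi_J[OF I] by (metis psi_diff psi_tpow_emb)
      then show "x j \<in> Xs j" using V j by (simp add: x_def qv_def)
    qed
    have "\<forall>i. (\<Sum>j<k. smult (c j) (y j i)) - 0 \<in> ?J" using z by (simp add: qv_eq[OF J])
    then have "\<forall>i. psi (\<Sum>j<k. smult (c j) (y j i)) \<in> I" using psi_J[OF I] by auto
    then have "\<forall>i. (\<Sum>j<k. smult (c j) (x j i)) - 0 \<in> I" by (simp add: x_def psi_sum psi_smult)
    then have xz: "qv I (\<lambda>i. \<Sum>j<k. smult (c j) (x j i)) = qv I (\<lambda>i. 0)" by (simp add: qv_eq[OF I])
    have "(\<forall>j<k. x j \<in> Xs j) \<longrightarrow> qv I (\<lambda>i. \<Sum>j<k. smult (c j) (x j i)) = qv I (\<lambda>i. 0) \<longrightarrow> (\<forall>j<k. c j = 0)"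
      using ind unfolding qindep_def by (elim allE)
    then show "\<forall>j<k. c j = 0" using xX xz by blast
  qed
  ultimately show ?thesis by blast
qed

lemma dir2:
  fixes I :: "('x, 'k::field) ncpoly set"
  assumes I: "graded_ideal I" and M: "rsubmod I M" and le: "\<And>i. \<delta>' i \<le> \<delta> i"
    and Ys: "\<forall>j<k. Ys j \<in> hpart (gen_ideal (emb ` I)) \<delta>' d (eta I \<delta> \<delta>' ` M)"
    and ind: "qindep (gen_ideal (emb ` I)) Ys k"
  shows "\<exists>Xs. (\<forall>j<k. Xs j \<in> hpart I \<delta> d M) \<and> qindep I Xs k"
proof -
  let ?J = "gen_ideal (emb ` I)"
  have I2: "twosided_ideal I" using I by (simp add: graded_ideal_def)
  have J: "twosided_ideal ?J" by (rule gen_ideal_ideal)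
  have Mr: "M \<subseteq> range (qv I)" using M by (simp add: rsubmod_def)
  have "\<forall>j\<in>{..<k}. \<exists>X. X \<in> M \<and> Ys j = eta I \<delta> \<delta>' X" using Ys by (auto simp: hpart_def)
  from bchoice[OF this] obtain Xs where XsM: "\<forall>j\<in>{..<k}. Xs j \<in> M \<and> Ys j = eta I \<delta> \<delta>' (Xs j)" by blast
  have "Xs j \<in> hpart I \<delta> d M" if j: "j<k" for j
  proof -
    obtain x where x: "Xs j = qv I x" using XsM j Mr by blast
    obtain w where w: "homv \<delta>' d w" "Ys j = qv ?J w" using Ys j by (auto simp: hpart_def)
    have "eta I \<delta> \<delta>' (qv I x) = qv ?J w" using XsM j x w by auto
    then have "\<exists>v. homv \<delta> d v \<and> qv I x = qv I v"
      by (intro homrep[of I \<delta>' \<delta>]) (use I le w in auto)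
    then obtain v where v: "homv \<delta> d v" "qv I x = qv I v" by blast
    have "Xs j \<in> M" using XsM j by simp
    then show ?thesis using x v unfolding hpart_def by blast
  qed
  moreover have "qindep I Xs k" unfolding qindep_def
  proof (rule allI, rule allI, rule impI, rule impI)
    fix x c assume x: "\<forall>j<k. x j \<in> Xs j" and z: "qv I (\<lambda>i. \<Sum>j<k. smult (c j) (x j i)) = qv I (\<lambda>i. 0)"
    define y where "y j = (\<lambda>i. tpow (\<delta> i - \<delta>' i) * emb (x j i))" for j
    have yY: "\<forall>j<k. y j \<in> Ys j"
    proof (intro allI impI)
      fix j assume j: "j < k"
      obtain x0 where x0: "Xs j = qv I x0" using XsM j Mr by blast
      have "qv I (x j) = Xs j" using qv_mem[OF I2] x j x0 by metis
      then have "Ys j = eta I \<delta> \<delta>' (qv I (x j))" using XsM j by simp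
      also have "\<dots> = qv ?J (y j)" by (simp add: eta_qv[OF I2] y_def)
      finally show "y j \<in> Ys j" using qv_self[OF J] by simp
    qed
    have "\<forall>i. (\<Sum>j<k. smult (c j) (x j i)) - 0 \<in> I" using z by (simp add: qv_eq[OF I2])
    then have "\<forall>i. emb (\<Sum>j<k. smult (c j) (x j i)) \<in> ?J" using gen_ideal_sub[of "emb ` I"] by auto
    then have "\<forall>i. tpow (\<delta> i - \<delta>' i) * emb (\<Sum>j<k. smult (c j) (x j i)) \<in> ?J"
      using ideal_lmult[OF J] by blast
    moreover have eq: "(\<Sum>j<k. smult (c j) (y j i)) = tpow (\<delta> i - \<delta>' i) * emb (\<Sum>j<k. smult (c j) (x j i))" for i
      unfolding y_def by (rule sum_smult_tpow_emb)
    ultimately have "\<forall>i. (\<Sum>j<k. smult (c j) (y j i)) - 0 \<in> ?J" by simp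
    then have yz: "qv ?J (\<lambda>i. \<Sum>j<k. smult (c j) (y j i)) = qv ?J (\<lambda>i. 0)" by (simp add: qv_eq[OF J])
    have "(\<forall>j<k. y j \<in> Ys j) \<longrightarrow> qv ?J (\<lambda>i. \<Sum>j<k. smult (c j) (y j i)) = qv ?J (\<lambda>i. 0) \<longrightarrow> (\<forall>j<k. c j = 0)"
      using ind unfolding qindep_def by (elim allE)
    then show "\<forall>j<k. c j = 0" using yY yz by blast
  qed
  ultimately show ?thesis by blast
qed

theorem mainTheorem1:
  fixes I :: "('x::finite, 'k::field) ncpoly set"
    and \<delta> \<delta>' :: "'r::finite \<Rightarrow> nat"
    and M :: "('r \<Rightarrow> ('x, 'k) ncpoly) set set"
  assumes "graded_ideal I"
    and "graded_rsubmod I \<delta> M"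
    and "\<And>i. \<delta>' i \<le> \<delta> i"
  shows "eta I \<delta> \<delta>' ` M = Hhom I \<delta> \<delta>' M \<inter> tA I \<delta> \<delta>'
    \<and> (\<forall>d. qdim I (hpart I \<delta> d M)
           = qdim (gen_ideal (emb ` I)) (hpart (gen_ideal (emb ` I)) \<delta>' d (Hhom I \<delta> \<delta>' M \<inter> tA I \<delta> \<delta>')))"
proof -
  have I2: "twosided_ideal I" using assms(1) by (simp add: graded_ideal_def)
  have M: "rsubmod I M" using assms(2) by (simp add: graded_rsubmod_def)
  have p1: "eta I \<delta> \<delta>' ` M = Hhom I \<delta> \<delta>' M \<inter> tA I \<delta> \<delta>'" by (rule part1[OF I2 M])
  have p2: "qdim I (hpart I \<delta> d M)
           = qdim (gen_ideal (emb ` I)) (hpart (gen_ideal (emb ` I)) \<delta>' d (Hhom I \<delta> \<delta>' M \<inter> tA I \<delta> \<delta>'))" for d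
  proof -
    have eqv: "(\<exists>Xs. (\<forall>j<k. Xs j \<in> hpart I \<delta> d M) \<and> qindep I Xs k) \<longleftrightarrow>
      (\<exists>Ys. (\<forall>j<k. Ys j \<in> hpart (gen_ideal (emb ` I)) \<delta>' d (eta I \<delta> \<delta>' ` M)) \<and> qindep (gen_ideal (emb ` I)) Ys k)" for k
    proof
      assume "\<exists>Xs. (\<forall>j<k. Xs j \<in> hpart I \<delta> d M) \<and> qindep I Xs k"
      then obtain Xs where a: "\<forall>j<k. Xs j \<in> hpart I \<delta> d M" "qindep I Xs k" by blast
      show "\<exists>Ys. (\<forall>j<k. Ys j \<in> hpart (gen_ideal (emb ` I)) \<delta>' d (eta I \<delta> \<delta>' ` M)) \<and> qindep (gen_ideal (emb ` I)) Ys k"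
        by (rule dir1[of I \<delta>' \<delta>]) (use I2 assms(3) a in auto)
    next
      assume "\<exists>Ys. (\<forall>j<k. Ys j \<in> hpart (gen_ideal (emb ` I)) \<delta>' d (eta I \<delta> \<delta>' ` M)) \<and> qindep (gen_ideal (emb ` I)) Ys k"
      then obtain Ys where a: "\<forall>j<k. Ys j \<in> hpart (gen_ideal (emb ` I)) \<delta>' d (eta I \<delta> \<delta>' ` M)" "qindep (gen_ideal (emb ` I)) Ys k" by blast
      show "\<exists>Xs. (\<forall>j<k. Xs j \<in> hpart I \<delta> d M) \<and> qindep I Xs k"
        by (rule dir2[of I M \<delta>' \<delta>]) (use assms(1) M assms(3) a in auto)
    qed
    show ?thesis unfolding qdim_def p1[symmetric] by (simp only: eqv)
  qed
  show ?thesis using p1 p2 by blast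
qed


end
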